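(* Let $n\geq 2$, $R>0$, $m$ a uniform (rotation-invariant) measure on $S^{n-1}_R$, $f:S^{n-1}_R\to[0,1]$ integrable, and $K:\mathbb{R}\to\mathbb{R}$ non-decreasing, bounded and measurable. Let $\sigma$ be a hyperplane through the origin not containing $r=(R,0,\ldots,0)$. Then for every $x \in S^{n-1}_R$, \[ \left|Kf^\sigma(x) - Kf^\sigma(\sigma x)\right| \geq \left|Kf(x) - Kf(\sigma x)\right|, \] where $Kg(x) = \int_{S^{n-1}_R} K(\langle x,y\rangle) g(y)\,dm(y)$.
   Context: $S^{n-1}_R = \{x\in\mathbb{R}^n:\|x\|=R\}$. Let $v$ be the unit normal of $\sigma$ with $\langle v,r\rangle>0$; $H^+_\sigma = \{x\in S^{n-1}_R : \langle x,v\rangle\geq 0\}$, $H^-_\sigma = \{x\in S^{n-1}_R:\langle x,v\rangle<0\}$; $\sigma x$ is the reflection of $x$ across $\sigma$. The polarization is $f^\sigma(x) = \max\{f(x),f(\sigma x)\}$ for $x\in H^+_\sigma$ and $f^\sigma(x)=\min\{f(x),f(\sigma x)\}$ for $x\in H^-_\sigma$. *)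

theory Defs
  imports "HOL-Analysis.Analysis"
begin

definition uniform_sphere_measure :: "real \<Rightarrow> 'a::euclidean_space measure \<Rightarrow> bool" where
  "uniform_sphere_measure R m \<longleftrightarrow>
     sets m = sets (restrict_space lborel (sphere 0 R)) \<and>
     finite_measure m \<and>
     (\<forall>T. orthogonal_transformation T \<longrightarrow> distr m m T = m)"

text \<open>Reflection across the hyperplane through 0 with unit normal v.\<close>
definition refl_hyp :: "'a::euclidean_space \<Rightarrow> 'a \<Rightarrow> 'a" where
  "refl_hyp v x = x - (2 * (x \<bullet> v)) *\<^sub>R v"

definition polarization :: "'a::euclidean_space \<Rightarrow> ('a \<Rightarrow> real) \<Rightarrow> 'a \<Rightarrow> real" where
  "polarization v f x =
     (if x \<bullet> v \<ge> 0 then max (f x) (f (refl_hyp v x)) else min (f x) (f (refl_hyp v x)))"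

definition Kop :: "'a::euclidean_space measure \<Rightarrow> (real \<Rightarrow> real) \<Rightarrow> ('a \<Rightarrow> real) \<Rightarrow> 'a \<Rightarrow> real" where
  "Kop m K g x = (LINT y|m. K (x \<bullet> y) * g y)"

end

theory Submission
  imports Defs
begin

lemma refl_inner_sym:
  fixes v x y :: "'a::euclidean_space"
  shows "refl_hyp v x \<bullet> y = x \<bullet> refl_hyp v y"
  unfolding refl_hyp_def by (simp add: inner_diff_left inner_diff_right inner_commute)

lemma refl_refl:
  fixes v x :: "'a::euclidean_space"
  assumes "norm v = 1"
  shows "refl_hyp v (refl_hyp v x) = x"
proof -
  have vv: "v \<bullet> v = 1" using assms by (simp add: norm_eq_1)
  show ?thesis unfolding refl_hyp_def
    by (simp add: inner_diff_left vv algebra_simps scaleR_diff_left)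
qed

lemma refl_v:
  fixes v x :: "'a::euclidean_space"
  assumes "norm v = 1"
  shows "refl_hyp v x \<bullet> v = - (x \<bullet> v)"
proof -
  have vv: "v \<bullet> v = 1" using assms by (simp add: norm_eq_1)
  show ?thesis unfolding refl_hyp_def by (simp add: inner_diff_left vv)
qed

lemma refl_diff:
  fixes v x y :: "'a::euclidean_space"
  shows "x \<bullet> y - refl_hyp v x \<bullet> y = 2 * (x \<bullet> v) * (y \<bullet> v)"
  unfolding refl_hyp_def by (simp add: inner_diff_left inner_diff_right inner_commute[of y v])

lemma refl_orth:
  fixes v :: "'a::euclidean_space"
  assumes "norm v = 1"
  shows "orthogonal_transformation (refl_hyp v)"
proof -
  have vv: "v \<bullet> v = 1" using assms by (simp add: norm_eq_1)
  have "linear (refl_hyp v)" unfolding refl_hyp_def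
    by (intro linearI) (simp_all add: inner_add_left algebra_simps scaleR_add_left)
  moreover have "refl_hyp v a \<bullet> refl_hyp v b = a \<bullet> b" for a b
    unfolding refl_hyp_def by (simp add: inner_diff_left inner_diff_right vv inner_commute algebra_simps)
  ultimately show ?thesis unfolding orthogonal_transformation_def by blast
qed

lemma pointwise:
  fixes v x y :: "'a::euclidean_space" and f :: "'a \<Rightarrow> real" and K :: "real \<Rightarrow> real"
  assumes v: "norm v = 1" and K: "mono K"
  defines "a \<equiv> K (x \<bullet> y) - K (refl_hyp v x \<bullet> y)"
  shows "x \<bullet> v \<ge> 0 \<Longrightarrow> a * (polarization v f y - polarization v f (refl_hyp v y))
            = \<bar>a * (f y - f (refl_hyp v y))\<bar>"
    and "x \<bullet> v < 0 \<Longrightarrow> a * (polarization v f y - polarization v f (refl_hyp v y))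
            = - \<bar>a * (f y - f (refl_hyp v y))\<bar>"
proof -
  have rr: "refl_hyp v (refl_hyp v y) = y" by (rule refl_refl[OF v])
  have rv: "refl_hyp v y \<bullet> v = - (y \<bullet> v)" by (rule refl_v[OF v])
  have d: "x \<bullet> y - refl_hyp v x \<bullet> y = 2 * (x \<bullet> v) * (y \<bullet> v)" by (rule refl_diff)
  have y0: "y \<bullet> v = 0 \<Longrightarrow> refl_hyp v y = y" unfolding refl_hyp_def by simp
  have apos: "a \<ge> 0" if "(x \<bullet> v) * (y \<bullet> v) \<ge> 0"
  proof -
    have "refl_hyp v x \<bullet> y \<le> x \<bullet> y" using d that by linarith
    then show ?thesis unfolding a_def using K by (simp add: mono_def)
  qed
  have aneg: "a \<le> 0" if "(x \<bullet> v) * (y \<bullet> v) \<le> 0"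
  proof -
    have "refl_hyp v x \<bullet> y \<ge> x \<bullet> y" using d that by linarith
    then show ?thesis unfolding a_def using K by (simp add: mono_def)
  qed
  have P1: "polarization v f y - polarization v f (refl_hyp v y) = \<bar>f y - f (refl_hyp v y)\<bar>" if "y \<bullet> v > 0"
    using that rv rr unfolding polarization_def by auto
  have P2: "polarization v f y - polarization v f (refl_hyp v y) = - \<bar>f y - f (refl_hyp v y)\<bar>" if "y \<bullet> v < 0"
    using that rv rr unfolding polarization_def by auto
  show "x \<bullet> v \<ge> 0 \<Longrightarrow> a * (polarization v f y - polarization v f (refl_hyp v y))
            = \<bar>a * (f y - f (refl_hyp v y))\<bar>"
  proof -
    assume xv: "x \<bullet> v \<ge> 0"
    consider "y \<bullet> v > 0" | "y \<bullet> v = 0" | "y \<bullet> v < 0" by linarith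
    then show ?thesis
    proof cases
      case 1
      then have "a \<ge> 0" using xv by (intro apos) simp
      then show ?thesis using P1[OF 1] by (simp add: abs_mult)
    next
      case 2 then show ?thesis using y0 by simp
    next
      case 3
      then have "a \<le> 0" using xv by (intro aneg) (simp add: mult_nonneg_nonpos)
      then show ?thesis using P2[OF 3] by (simp add: abs_mult)
    qed
  qed
  show "x \<bullet> v < 0 \<Longrightarrow> a * (polarization v f y - polarization v f (refl_hyp v y))
            = - \<bar>a * (f y - f (refl_hyp v y))\<bar>"
  proof -
    assume xv: "x \<bullet> v < 0"
    consider "y \<bullet> v > 0" | "y \<bullet> v = 0" | "y \<bullet> v < 0" by linarith
    then show ?thesis
    proof cases
      case 1
      then have "a \<le> 0" using xv by (intro aneg) (simp add: mult_nonpos_nonneg)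
      then show ?thesis using P1[OF 1] by (simp add: abs_mult)
    next
      case 2 then show ?thesis using y0 by simp
    next
      case 3
      then have "a \<ge> 0" using xv by (intro apos) (simp add: zero_le_mult_iff)
      then show ?thesis using P2[OF 3] by (simp add: abs_mult)
    qed
  qed
qed


theorem lemma11:
  fixes R :: real and m :: "'a::euclidean_space measure"
    and f :: "'a \<Rightarrow> real" and K :: "real \<Rightarrow> real"
    and e v :: 'a
  assumes dim: "DIM('a) \<ge> 2"
    and R: "R > 0"
    and m: "uniform_sphere_measure R m"
    and f_range: "\<forall>x\<in>sphere 0 R. 0 \<le> f x \<and> f x \<le> 1"
    and f_int: "integrable m f"
    and K_mono: "mono K"
    and K_bdd: "bounded (range K)"
    and K_meas: "K \<in> borel_measurable borel"
    and e: "e \<in> Basis"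
    and v_unit: "norm v = 1"
    and v_r: "v \<bullet> (R *\<^sub>R e) > 0"
  shows "\<forall>x\<in>sphere 0 R.
    \<bar>Kop m K (polarization v f) x - Kop m K (polarization v f) (refl_hyp v x)\<bar>
      \<ge> \<bar>Kop m K f x - Kop m K f (refl_hyp v x)\<bar>"
proof
  define S where "S = sphere (0::'a) R"
  define \<sigma> where "\<sigma> = refl_hyp v"
  have msets: "sets m = sets (restrict_space lborel S)"
    and fin: "finite_measure m"
    and inv: "\<And>T. orthogonal_transformation T \<Longrightarrow> distr m m T = m"
    using m unfolding uniform_sphere_measure_def S_def by auto
  interpret finite_measure m by (rule fin)
  have space_m: "space m = S"
    using sets_eq_imp_space_eq[OF msets] by (simp add: space_restrict_space)
  have meas_m: "h \<in> borel_measurable m" if "h \<in> borel_measurable borel" for h :: "'a \<Rightarrow> real"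
    using measurable_restrict_space1[of h lborel borel S] that
      measurable_cong_sets[OF msets refl, of "borel :: real measure"] by simp
  have \<sigma>S: "\<sigma> y \<in> S" if "y \<in> S" for y
  proof -
    have "norm (\<sigma> y) = norm y"
      using refl_orth[OF v_unit] unfolding \<sigma>_def orthogonal_transformation by blast
    then show ?thesis using that unfolding S_def by simp
  qed
  have \<sigma>_bor: "\<sigma> \<in> borel_measurable borel" unfolding \<sigma>_def refl_hyp_def by measurable
  have \<sigma>meas: "\<sigma> \<in> measurable m m"
    using measurable_restrict_space3[of \<sigma> lborel lborel S S] \<sigma>_bor \<sigma>S
      measurable_cong_sets[OF msets msets] by auto
  have distr\<sigma>: "distr m m \<sigma> = m" unfolding \<sigma>_def by (rule inv[OF refl_orth[OF v_unit]])
  have transf: "integral\<^sup>L m h = integral\<^sup>L m (\<lambda>y. h (\<sigma> y))" if "h \<in> borel_measurable m" for h :: "'a \<Rightarrow> real"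
    using integral_distr[OF \<sigma>meas that] distr\<sigma> by simp
  obtain B where B: "\<And>t. \<bar>K t\<bar> \<le> B"
    using K_bdd unfolding bounded_iff by auto
  have fmeas: "f \<in> borel_measurable m" using f_int by auto
  have f\<sigma>meas: "(\<lambda>y. f (\<sigma> y)) \<in> borel_measurable m" using measurable_compose[OF \<sigma>meas fmeas] .
  have Kmeas: "(\<lambda>y. K (z \<bullet> y)) \<in> borel_measurable m" for z
    by (rule meas_m) (use K_meas in measurable)
  have polmeas: "polarization v f \<in> borel_measurable m"
  proof -
    have pe: "polarization v f = (\<lambda>y. if 0 \<le> y \<bullet> v then max (f y) (f (\<sigma> y)) else min (f y) (f (\<sigma> y)))"
      unfolding polarization_def \<sigma>_def by auto
    have iv: "(\<lambda>y. y \<bullet> v) \<in> borel_measurable m" by (rule meas_m) measurable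
    show ?thesis unfolding pe using fmeas f\<sigma>meas iv by measurable
  qed
  have polbd: "\<bar>polarization v f y\<bar> \<le> 1" if "y \<in> S" for y
  proof -
    have "0 \<le> f y" "f y \<le> 1" "0 \<le> f (\<sigma> y)" "f (\<sigma> y) \<le> 1"
      using f_range that \<sigma>S[OF that] unfolding S_def by auto
    then show ?thesis unfolding polarization_def \<sigma>_def[symmetric] by auto
  qed
  have fbd: "\<bar>f y\<bar> \<le> 1" if "y \<in> S" for y
    using f_range that unfolding S_def by auto
  have intb: "integrable m h" if "h \<in> borel_measurable m" "\<And>y. y \<in> S \<Longrightarrow> \<bar>h y\<bar> \<le> C" for h :: "'a \<Rightarrow> real" and C
    by (rule integrable_const_bound[where B=C]) (use that space_m in auto)
  fix x :: 'a assume xS: "x \<in> sphere 0 R"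
  define a where "a y = K (x \<bullet> y) - K (\<sigma> x \<bullet> y)" for y
  have ameas: "a \<in> borel_measurable m" unfolding a_def using Kmeas by measurable
  have abd: "\<bar>a y\<bar> \<le> 2 * B" for y unfolding a_def using B[of "x \<bullet> y"] B[of "\<sigma> x \<bullet> y"] by linarith
  have a\<sigma>: "a (\<sigma> y) = - a y" for y
    unfolding a_def \<sigma>_def using refl_inner_sym[of v x] refl_refl[OF v_unit]
    by (metis minus_diff_eq)
  have key: "2 * (Kop m K g x - Kop m K g (\<sigma> x)) = (LINT y|m. a y * (g y - g (\<sigma> y)))"
    if gm: "g \<in> borel_measurable m" and gb: "\<And>y. y \<in> S \<Longrightarrow> \<bar>g y\<bar> \<le> 1" for g
  proof -
    have g\<sigma>m: "(\<lambda>y. g (\<sigma> y)) \<in> borel_measurable m" using measurable_compose[OF \<sigma>meas gm] .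
    have g\<sigma>b: "\<bar>g (\<sigma> y)\<bar> \<le> 1" if "y \<in> S" for y using gb \<sigma>S that by blast
    have bnd: "\<bar>K z * g y\<bar> \<le> B" if "y \<in> S" for z y
    proof -
      have "\<bar>K z * g y\<bar> = \<bar>K z\<bar> * \<bar>g y\<bar>" by (simp add: abs_mult)
      also have "\<dots> \<le> B * 1" using B[of z] gb[OF that] by (intro mult_mono) auto
      finally show ?thesis by simp
    qed
    have bnd2: "\<bar>a y * g z\<bar> \<le> 2 * B" if "z \<in> S" for z y
    proof -
      have "\<bar>a y * g z\<bar> = \<bar>a y\<bar> * \<bar>g z\<bar>" by (simp add: abs_mult)
      also have "\<dots> \<le> 2 * B * 1" using abd[of y] gb[OF that] by (intro mult_mono) auto
      finally show ?thesis by simp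
    qed
    have i1: "integrable m (\<lambda>y. K (z \<bullet> y) * g y)" for z
      by (rule intb[where C=B]) (use Kmeas gm bnd in auto)
    have i2: "integrable m (\<lambda>y. a y * g y)"
      by (rule intb[where C="2*B"]) (use ameas gm bnd2 in auto)
    have i3: "integrable m (\<lambda>y. a y * g (\<sigma> y))"
      by (rule intb[where C="2*B"]) (use ameas g\<sigma>m bnd2 \<sigma>S in auto)
    have D: "Kop m K g x - Kop m K g (\<sigma> x) = (LINT y|m. a y * g y)"
      unfolding Kop_def a_def
      by (subst Bochner_Integration.integral_diff[symmetric]) (auto intro: i1 simp: left_diff_distrib)
    have "(LINT y|m. a y * g y) = (LINT y|m. a (\<sigma> y) * g (\<sigma> y))"
      by (rule transf) (use ameas gm in measurable)
    also have "\<dots> = - (LINT y|m. a y * g (\<sigma> y))" by (simp add: a\<sigma>)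
    finally have E: "(LINT y|m. a y * g y) = - (LINT y|m. a y * g (\<sigma> y))" .
    have "(LINT y|m. a y * (g y - g (\<sigma> y))) = (LINT y|m. a y * g y) - (LINT y|m. a y * g (\<sigma> y))"
      by (subst Bochner_Integration.integral_diff[symmetric]) (auto intro: i2 i3 simp: right_diff_distrib)
    then show ?thesis using D E by simp
  qed
  define b where "b y = f y - f (\<sigma> y)" for y
  have bm: "b \<in> borel_measurable m" unfolding b_def using fmeas f\<sigma>meas by measurable
  have abd2: "\<bar>a y * b y\<bar> \<le> 2 * B * 2" if "y \<in> S" for y
  proof -
    have "\<bar>a y * b y\<bar> = \<bar>a y\<bar> * \<bar>b y\<bar>" by (simp add: abs_mult)
    also have "\<dots> \<le> 2 * B * 2" using abd[of y] fbd[OF that] fbd[OF \<sigma>S[OF that]]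
      unfolding b_def by (intro mult_mono) auto
    finally show ?thesis .
  qed
  have iab: "integrable m (\<lambda>y. \<bar>a y * b y\<bar>)"
    by (rule intb[where C="2*B*2"]) (use ameas bm abd2 in auto)
  have kf: "2 * (Kop m K f x - Kop m K f (\<sigma> x)) = (LINT y|m. a y * b y)"
    unfolding b_def by (rule key[OF fmeas fbd])
  have kp: "2 * (Kop m K (polarization v f) x - Kop m K (polarization v f) (\<sigma> x))
      = (LINT y|m. a y * (polarization v f y - polarization v f (\<sigma> y)))"
    by (rule key[OF polmeas polbd])
  have P: "\<bar>LINT y|m. a y * (polarization v f y - polarization v f (\<sigma> y))\<bar> = (LINT y|m. \<bar>a y * b y\<bar>)"
  proof (cases "x \<bullet> v \<ge> 0")
    case True
    have "(LINT y|m. a y * (polarization v f y - polarization v f (\<sigma> y))) = (LINT y|m. \<bar>a y * b y\<bar>)"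
      unfolding a_def b_def \<sigma>_def using pointwise(1)[OF v_unit K_mono True] by simp
    moreover have "(LINT y|m. \<bar>a y * b y\<bar>) \<ge> 0" by simp
    ultimately show ?thesis by simp
  next
    case False
    then have F: "x \<bullet> v < 0" by simp
    have "(LINT y|m. a y * (polarization v f y - polarization v f (\<sigma> y))) = (LINT y|m. - \<bar>a y * b y\<bar>)"
      unfolding a_def b_def \<sigma>_def using pointwise(2)[OF v_unit K_mono F] by simp
    moreover have "(LINT y|m. \<bar>a y * b y\<bar>) \<ge> 0" by simp
    ultimately show ?thesis by simp
  qed
  have N: "\<bar>LINT y|m. a y * b y\<bar> \<le> (LINT y|m. \<bar>a y * b y\<bar>)"
    using integral_norm_bound[of m "\<lambda>y. a y * b y"] by simp
  have "2 * \<bar>Kop m K f x - Kop m K f (\<sigma> x)\<bar> \<le> 2 * \<bar>Kop m K (polarization v f) x - Kop m K (polarization v f) (\<sigma> x)\<bar>"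
    using kf kp P N by (metis abs_mult abs_numeral)
  then show "\<bar>Kop m K (polarization v f) x - Kop m K (polarization v f) (refl_hyp v x)\<bar>
      \<ge> \<bar>Kop m K f x - Kop m K f (refl_hyp v x)\<bar>" unfolding \<sigma>_def by simp
qed

end
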